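(* Let $P=\{\pi=(\pi_0,\dots,\pi_c)\in(0,\infty)^{c+1}:\ \sum_{j=0}^c\pi_j=1,\ (c-j+1)\pi_{j-1}\le \lambda d\,\pi_j \text{ for all } j\in\{1,\dots,c\}\}$ and, for $\pi\in P$, let $$\Pi(\pi)=\sum_{j=1}^c \pi_j\,\lambda\, g\!\left(\frac{(c-j+1)\,\pi_{j-1}}{\lambda d\,\pi_j}\right).$$ Then $P$ is convex and $\Pi$ is concave on $P$. Moreover, for every $\pi\in P$, setting $x_j=\frac{(c-j+1)\pi_{j-1}}{\lambda d\pi_j}$ for $j=1,\dots,c$ defines a stock-dependent policy $\mathbf x\in(0,1]^c$ whose steady-state distribution is $\pi$ and whose long-run average reward is $\mathcal R(\mathbf x)=\Pi(\pi)$; thus maximizing over stock-dependent policies with strictly positive steady-state probabilities is a convex program in $\pi$.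
   Context: Setting. Fix $c\in\mathbb N$ (number of identical units of a single reusable resource), an arrival rate $\lambda>0$ and a mean usage duration $d>0$, with $x^*:=c/(\lambda d)\in(0,1)$. Let $g:[0,1]\to\mathbb R$ be concave, non-decreasing, with $g(0)=0$ (the reward function; $\partial g(x)$ denotes its set of supergradients at $x$). A stock-dependent policy is a vector $\mathbf x=(x_1,\dots,x_c)\in[0,1]^c$, where $x_j$ is the admission probability used when exactly $j$ units are available (the admission probability is $0$ when no unit is available). Its steady-state distribution is the unique probability vector $\pi=(\pi_0,\dots,\pi_c)$ satisfying $\pi_j\lambda x_j=\pi_{j-1}(c-j+1)/d$ for all $j\in\{1,\dots,c\}$ (by an insensitivity result, for any usage-duration distribution with mean $d$, $\pi_j$ is the long-run fraction of time with exactly $j$ units available), and its long-run average reward is $\mathcal R(\mathbf x)=\sum_{j=1}^c\pi_j\lambda g(x_j)$. *)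

theory Defs
  imports "HOL-Analysis.Analysis"
begin

text \<open>Distributions over stock levels 0..c are represented as functions nat \<Rightarrow> real,
  required to vanish outside {0..c}. Policies are functions nat \<Rightarrow> real whose
  values at 1..c are the admission probabilities (values elsewhere are irrelevant).\<close>

definition is_policy :: "nat \<Rightarrow> (nat \<Rightarrow> real) \<Rightarrow> bool" where
  "is_policy c x \<longleftrightarrow> (\<forall>j\<in>{1..c}. 0 \<le> x j \<and> x j \<le> 1)"

definition balance_dist :: "nat \<Rightarrow> real \<Rightarrow> real \<Rightarrow> (nat \<Rightarrow> real) \<Rightarrow> (nat \<Rightarrow> real) \<Rightarrow> bool" where
  "balance_dist c lam d x p \<longleftrightarrow>
     (\<forall>j\<in>{0..c}. 0 \<le> p j) \<and> (\<forall>j>c. p j = 0) \<and> (\<Sum>j=0..c. p j) = 1 \<and>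
     (\<forall>j\<in>{1..c}. p j * lam * x j = p (j - 1) * real (c - j + 1) / d)"

definition steady_state :: "nat \<Rightarrow> real \<Rightarrow> real \<Rightarrow> (nat \<Rightarrow> real) \<Rightarrow> (nat \<Rightarrow> real)" where
  "steady_state c lam d x = (THE p. balance_dist c lam d x p)"

definition avg_reward :: "nat \<Rightarrow> real \<Rightarrow> real \<Rightarrow> (real \<Rightarrow> real) \<Rightarrow> (nat \<Rightarrow> real) \<Rightarrow> real" where
  "avg_reward c lam d g x = (\<Sum>j=1..c. steady_state c lam d x j * lam * g (x j))"

definition Pset :: "nat \<Rightarrow> real \<Rightarrow> real \<Rightarrow> (nat \<Rightarrow> real) set" where
  "Pset c lam d = {p. (\<forall>j\<in>{0..c}. 0 < p j) \<and> (\<forall>j>c. p j = 0) \<and> (\<Sum>j=0..c. p j) = 1 \<and>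
       (\<forall>j\<in>{1..c}. real (c - j + 1) * p (j - 1) \<le> lam * d * p j)}"

definition PiR :: "nat \<Rightarrow> real \<Rightarrow> real \<Rightarrow> (real \<Rightarrow> real) \<Rightarrow> (nat \<Rightarrow> real) \<Rightarrow> real" where
  "PiR c lam d g p = (\<Sum>j=1..c. p j * lam * g (real (c - j + 1) * p (j - 1) / (lam * d * p j)))"

end

theory Submission
  imports Defs
begin

lemma persp:
  fixes g :: "real \<Rightarrow> real"
  assumes gc: "concave_on {0..1} g" and pv: "pv > 0" and qv: "qv > 0"
    and t: "0 \<le> t" "t \<le> 1"
    and x1: "0 \<le> x1" "x1 \<le> 1" and x2: "0 \<le> x2" "x2 \<le> 1"
  shows "t * pv * g x1 + (1 - t) * qv * g x2
     \<le> (t * pv + (1 - t) * qv) * g ((t * pv * x1 + (1 - t) * qv * x2) / (t * pv + (1 - t) * qv))"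
proof -
  define V where "V = t * pv + (1 - t) * qv"
  have V: "V > 0"
  proof (cases "t = 0")
    case True then show ?thesis using qv by (simp add: V_def)
  next
    case False then have "t * pv > 0" using t pv by simp
    moreover have "(1 - t) * qv \<ge> 0" using t qv by simp
    ultimately show ?thesis by (simp add: V_def)
  qed
  define s where "s = t * pv / V"
  have s0: "0 \<le> s" using t pv V by (simp add: s_def)
  have s1: "1 - s = (1 - t) * qv / V" using V by (simp add: s_def V_def field_simps)
  have s1': "s \<le> 1" using s1 t qv V by (smt (verit) divide_nonneg_pos mult_nonneg_nonneg)
  have arg: "(t * pv * x1 + (1 - t) * qv * x2) / V = (1 - s) *\<^sub>R x2 + s *\<^sub>R x1"
  proof -
    have "(1 - s) *\<^sub>R x2 + s *\<^sub>R x1 = (1 - t) * qv / V * x2 + t * pv / V * x1"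
      by (simp only: s1 real_scaleR_def) (simp add: s_def)
    also have "\<dots> = (t * pv * x1 + (1 - t) * qv * x2) / V" using V by (simp add: field_simps)
    finally show ?thesis by simp
  qed
  have "g ((1 - s) *\<^sub>R x2 + s *\<^sub>R x1) \<ge> (1 - s) * g x2 + s * g x1"
    using concave_onD[OF gc s0 s1'] x1 x2 by simp
  then have "V * g ((t * pv * x1 + (1 - t) * qv * x2) / V) \<ge> V * ((1 - s) * g x2 + s * g x1)"
    using V arg by simp
  moreover have "V * ((1 - s) * g x2 + s * g x1) = t * pv * g x1 + (1 - t) * qv * g x2"
  proof -
    have "V * ((1 - s) * g x2 + s * g x1) = V * ((1 - t) * qv / V * g x2 + t * pv / V * g x1)"
      by (simp only: s1) (simp add: s_def)
    also have "\<dots> = t * pv * g x1 + (1 - t) * qv * g x2" using V by (simp add: field_simps)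
    finally show ?thesis .
  qed
  ultimately show ?thesis by (simp add: V_def)
qed

theorem proposition2:
  fixes c :: nat and lam d :: real and g :: "real \<Rightarrow> real"
  assumes lam: "lam > 0" and d: "d > 0"
    and xstar: "0 < real c / (lam * d)" "real c / (lam * d) < 1"
    and g_concave: "concave_on {0..1} g"
    and g_mono: "mono_on {0..1} g"
    and g0: "g 0 = 0"
  shows "(\<forall>p\<in>Pset c lam d. \<forall>q\<in>Pset c lam d. \<forall>t::real. 0 \<le> t \<and> t \<le> 1 \<longrightarrow>
            (\<lambda>j. t * p j + (1 - t) * q j) \<in> Pset c lam d)
       \<and> (\<forall>p\<in>Pset c lam d. \<forall>q\<in>Pset c lam d. \<forall>t::real. 0 \<le> t \<and> t \<le> 1 \<longrightarrow>
            t * PiR c lam d g p + (1 - t) * PiR c lam d g q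
              \<le> PiR c lam d g (\<lambda>j. t * p j + (1 - t) * q j))
       \<and> (\<forall>p\<in>Pset c lam d.
            let x = (\<lambda>j. real (c - j + 1) * p (j - 1) / (lam * d * p j)) in
              is_policy c x \<and> (\<forall>j\<in>{1..c}. 0 < x j \<and> x j \<le> 1)
              \<and> steady_state c lam d x = p
              \<and> avg_reward c lam d g x = PiR c lam d g p)"
proof (intro conjI ballI allI impI)
  have ld: "lam * d > 0" using lam d by simp
  fix p q :: "nat \<Rightarrow> real" and t :: real
  assume p: "p \<in> Pset c lam d" and q: "q \<in> Pset c lam d" and t: "0 \<le> t \<and> t \<le> 1"
  have pos: "0 < t * p j + (1 - t) * q j" if "j \<in> {0..c}" for j
  proof -
    have "p j > 0" "q j > 0" using p q that by (auto simp: Pset_def)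
    then show ?thesis using t
      by (smt (verit, best) mult_le_cancel_right mult_nonneg_nonneg mult_pos_pos)
  qed
  show "(\<lambda>j. t * p j + (1 - t) * q j) \<in> Pset c lam d"
    unfolding Pset_def
  proof (intro CollectI conjI ballI allI impI)
    fix j assume "j \<in> {0..c}" then show "0 < t * p j + (1 - t) * q j" by (rule pos)
  next
    fix j assume "j > c" then show "t * p j + (1 - t) * q j = 0" using p q by (simp add: Pset_def)
  next
    have "(\<Sum>j=0..c. t * p j + (1 - t) * q j) = t * (\<Sum>j=0..c. p j) + (1 - t) * (\<Sum>j=0..c. q j)"
      by (simp add: sum.distrib sum_distrib_left)
    then show "(\<Sum>j=0..c. t * p j + (1 - t) * q j) = 1" using p q by (simp add: Pset_def)
  next
    fix j assume j: "j \<in> {1..c}"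
    have a: "real (c - j + 1) * p (j - 1) \<le> lam * d * p j" "real (c - j + 1) * q (j - 1) \<le> lam * d * q j"
      using p q j by (auto simp: Pset_def)
    have "t * (real (c - j + 1) * p (j - 1)) \<le> t * (lam * d * p j)"
      using a t by (simp add: mult_left_mono)
    moreover have "(1 - t) * (real (c - j + 1) * q (j - 1)) \<le> (1 - t) * (lam * d * q j)"
      using a t by (simp add: mult_left_mono)
    ultimately show "real (c - j + 1) * (t * p (j - 1) + (1 - t) * q (j - 1)) \<le> lam * d * (t * p j + (1 - t) * q j)"
      by (simp add: algebra_simps)
  qed
next
  have ld: "lam * d > 0" using lam d by simp
  fix p q :: "nat \<Rightarrow> real" and t :: real
  assume p: "p \<in> Pset c lam d" and q: "q \<in> Pset c lam d" and t: "0 \<le> t \<and> t \<le> 1"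
  have termj: "t * (p j * lam * g (real (c - j + 1) * p (j - 1) / (lam * d * p j)))
      + (1 - t) * (q j * lam * g (real (c - j + 1) * q (j - 1) / (lam * d * q j)))
      \<le> (t * p j + (1 - t) * q j) * lam * g (real (c - j + 1) * (t * p (j - 1) + (1 - t) * q (j - 1))
            / (lam * d * (t * p j + (1 - t) * q j)))" if j: "j \<in> {1..c}" for j
  proof -
    have pj: "p j > 0" "p (j-1) > 0" "q j > 0" "q (j-1) > 0" using p q j by (auto simp: Pset_def)
    have a: "real (c - j + 1) * p (j - 1) \<le> lam * d * p j" "real (c - j + 1) * q (j - 1) \<le> lam * d * q j"
      using p q j by (auto simp: Pset_def)
    define x1 where "x1 = real (c - j + 1) * p (j - 1) / (lam * d * p j)"
    define x2 where "x2 = real (c - j + 1) * q (j - 1) / (lam * d * q j)"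
    have x1: "0 \<le> x1" "x1 \<le> 1" unfolding x1_def using pj ld a by (auto simp: divide_le_eq)
    have x2: "0 \<le> x2" "x2 \<le> 1" unfolding x2_def using pj ld a by (auto simp: divide_le_eq)
    have V: "t * p j + (1 - t) * q j > 0" using pj t
      by (smt (verit, best) mult_le_cancel_right mult_nonneg_nonneg mult_pos_pos)
    have eq: "real (c - j + 1) * (t * p (j - 1) + (1 - t) * q (j - 1)) / (lam * d * (t * p j + (1 - t) * q j))
        = (t * p j * x1 + (1 - t) * q j * x2) / (t * p j + (1 - t) * q j)"
    proof -
      define C where "C = real (c - j + 1)"
      have e1: "t * p j * x1 = t * (C * p (j - 1)) / (lam * d)"
        using pj lam d by (simp add: x1_def C_def field_simps)
      have e2: "(1 - t) * q j * x2 = (1 - t) * (C * q (j - 1)) / (lam * d)"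
        using pj lam d by (simp add: x2_def C_def field_simps)
      have "(t * p j * x1 + (1 - t) * q j * x2) = C * (t * p (j - 1) + (1 - t) * q (j - 1)) / (lam * d)"
        unfolding e1 e2 by (simp add: add_divide_distrib[symmetric] algebra_simps)
      then show ?thesis by (simp add: C_def mult.commute)
    qed
    have "t * p j * g x1 + (1 - t) * q j * g x2
       \<le> (t * p j + (1 - t) * q j) * g ((t * p j * x1 + (1 - t) * q j * x2) / (t * p j + (1 - t) * q j))"
      using persp[OF g_concave pj(1) pj(3) _ _ x1 x2] t by blast
    then have "lam * (t * p j * g x1 + (1 - t) * q j * g x2)
       \<le> lam * ((t * p j + (1 - t) * q j) * g ((t * p j * x1 + (1 - t) * q j * x2) / (t * p j + (1 - t) * q j)))"
      using lam by simp
    then have fin: "t * (p j * lam * g x1) + (1 - t) * (q j * lam * g x2)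
       \<le> (t * p j + (1 - t) * q j) * lam * g ((t * p j * x1 + (1 - t) * q j * x2) / (t * p j + (1 - t) * q j))"
      by (simp only: algebra_simps)
    show ?thesis unfolding eq x1_def[symmetric] x2_def[symmetric] by (rule fin)
  qed
  have "t * PiR c lam d g p + (1 - t) * PiR c lam d g q =
     (\<Sum>j=1..c. t * (p j * lam * g (real (c - j + 1) * p (j - 1) / (lam * d * p j)))
      + (1 - t) * (q j * lam * g (real (c - j + 1) * q (j - 1) / (lam * d * q j))))"
    by (simp add: PiR_def sum.distrib sum_distrib_left)
  also have "\<dots> \<le> PiR c lam d g (\<lambda>j. t * p j + (1 - t) * q j)"
    unfolding PiR_def by (rule sum_mono) (rule termj)
  finally show "t * PiR c lam d g p + (1 - t) * PiR c lam d g q \<le> PiR c lam d g (\<lambda>j. t * p j + (1 - t) * q j)" .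
next
  have ld: "lam * d > 0" using lam d by simp
  fix p assume p: "p \<in> Pset c lam d"
  define x where "x = (\<lambda>j. real (c - j + 1) * p (j - 1) / (lam * d * p j))"
  have xj: "0 < x j \<and> x j \<le> 1" if j: "j \<in> {1..c}" for j
  proof -
    have pj: "p j > 0" "p (j-1) > 0" using p j by (auto simp: Pset_def)
    have a: "real (c - j + 1) * p (j - 1) \<le> lam * d * p j" using p j by (auto simp: Pset_def)
    have "real (c - j + 1) > 0" using j by auto
    then show ?thesis unfolding x_def using pj ld a by (auto simp: divide_le_eq)
  qed
  have bal: "balance_dist c lam d x p"
    unfolding balance_dist_def
  proof (intro conjI ballI allI impI)
    fix j assume "j \<in> {0..c}" then show "0 \<le> p j" using p by (auto simp: Pset_def less_imp_le)
  next
    fix j assume "j > c" then show "p j = 0" using p by (simp add: Pset_def)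
  next
    show "(\<Sum>j=0..c. p j) = 1" using p by (simp add: Pset_def)
  next
    fix j assume j: "j \<in> {1..c}"
    have pj: "p j > 0" using p j by (auto simp: Pset_def)
    show "p j * lam * x j = p (j - 1) * real (c - j + 1) / d"
      unfolding x_def using pj lam d by (simp add: field_simps)
  qed
  have uniq: "r = p" if r: "balance_dist c lam d x r" for r
  proof -
    have p0: "p 0 > 0" using p by (auto simp: Pset_def)
    have step: "r (Suc j) * p j = r j * p (Suc j)" if j: "Suc j \<le> c" for j
    proof -
      have jj: "Suc j \<in> {1..c}" using j by simp
      have e1: "r (Suc j) * lam * x (Suc j) = r j * real (c - Suc j + 1) / d"
        using r jj unfolding balance_dist_def by (metis diff_Suc_1)
      have e2: "p (Suc j) * lam * x (Suc j) = p j * real (c - Suc j + 1) / d"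
        using bal jj unfolding balance_dist_def by (metis diff_Suc_1)
      have "lam * x (Suc j) > 0" using xj[OF jj] lam by simp
      moreover have "(r (Suc j) * p j) * (lam * x (Suc j)) = (r j * p (Suc j)) * (lam * x (Suc j))"
      proof -
        have "(r (Suc j) * p j) * (lam * x (Suc j)) = (r (Suc j) * lam * x (Suc j)) * p j" by simp
        also have "\<dots> = r j * (p (Suc j) * lam * x (Suc j))" unfolding e1 e2 by simp
        finally show ?thesis by simp
      qed
      ultimately show ?thesis by (metis mult_cancel_right less_irrefl)
    qed
    define k where "k = r 0 / p 0"
    have rk: "r j = k * p j" if "j \<le> c" for j
      using that
    proof (induction j)
      case 0 then show ?case using p0 by (simp add: k_def)
    next
      case (Suc j)
      have pj: "p j > 0" using p Suc.prems by (auto simp: Pset_def)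
      have "r (Suc j) * p j = k * p (Suc j) * p j" using step[OF Suc.prems] Suc by simp
      then show ?case using pj by simp
    qed
    have "(\<Sum>j=0..c. r j) = 1" using r by (simp add: balance_dist_def)
    also have "(\<Sum>j=0..c. r j) = k * (\<Sum>j=0..c. p j)" by (simp add: rk sum_distrib_left)
    finally have "k = 1" using p by (simp add: Pset_def)
    show "r = p"
    proof
      fix j show "r j = p j"
      proof (cases "j \<le> c")
        case True then show ?thesis using rk \<open>k = 1\<close> by simp
      next
        case False then show ?thesis using r p by (simp add: balance_dist_def Pset_def)
      qed
    qed
  qed
  have ss: "steady_state c lam d x = p"
    unfolding steady_state_def using bal uniq by (rule the_equality)
  show "let x = (\<lambda>j. real (c - j + 1) * p (j - 1) / (lam * d * p j)) in
              is_policy c x \<and> (\<forall>j\<in>{1..c}. 0 < x j \<and> x j \<le> 1)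
              \<and> steady_state c lam d x = p
              \<and> avg_reward c lam d g x = PiR c lam d g p"
    unfolding Let_def x_def[symmetric]
    using xj ss by (auto simp: is_policy_def avg_reward_def PiR_def x_def less_imp_le)
qed

end
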